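(* Let $\mathcal{F}\subseteq\mathcal{P}(\omega)$ be a free filter that is non-meager. Then there is a countable dense set $D\subseteq C_p(\xi(\mathcal{F}))$ such that for every crowded $P\subseteq D$ there is a crowded subset $Q\subseteq P$ whose closure in $C_p(\xi(\mathcal{F}))$ is compact.
   Context: A filter on $\omega$ is free if it contains all cofinite sets; it is non-meager if it is not a meager subset of the Cantor set $2^\omega$ (subsets of $\omega$ identified with characteristic functions). $\xi(\mathcal{F})$ is the space $\omega\cup\{\infty\}$ in which every point of $\omega$ is isolated and the neighborhoods of $\infty$ are the sets $\{\infty\}\cup A$ with $A\in\mathcal{F}$. $C_p(X)$ is the space of continuous functions $X\to\mathbb{R}$ with the pointwise convergence topology. A space is crowded if it is non-empty and has no isolated points. *)

theory Defs
  imports "HOL-Analysis.Analysis"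
begin

definition is_filter_on_nat :: "nat set set \<Rightarrow> bool" where
  "is_filter_on_nat F \<longleftrightarrow> UNIV \<in> F \<and> {} \<notin> F \<and>
     (\<forall>A B. A \<in> F \<longrightarrow> B \<in> F \<longrightarrow> A \<inter> B \<in> F) \<and>
     (\<forall>A B. A \<in> F \<longrightarrow> A \<subseteq> B \<longrightarrow> B \<in> F)"

definition free_filter :: "nat set set \<Rightarrow> bool" where
  "free_filter F \<longleftrightarrow> is_filter_on_nat F \<and> (\<forall>A. finite (UNIV - A) \<longrightarrow> A \<in> F)"

definition cantor_topology :: "(nat \<Rightarrow> bool) topology" where
  "cantor_topology = product_topology (\<lambda>_. discrete_topology (UNIV :: bool set)) UNIV"

definition nowhere_dense_in :: "'a topology \<Rightarrow> 'a set \<Rightarrow> bool" where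
  "nowhere_dense_in X S \<longleftrightarrow> S \<subseteq> topspace X \<and> X interior_of (X closure_of S) = {}"

definition meager_in :: "'a topology \<Rightarrow> 'a set \<Rightarrow> bool" where
  "meager_in X S \<longleftrightarrow> (\<exists>\<N>. countable \<N> \<and> (\<forall>N\<in>\<N>. nowhere_dense_in X N) \<and> S \<subseteq> \<Union>\<N>)"

definition non_meager_family :: "nat set set \<Rightarrow> bool" where
  "non_meager_family F \<longleftrightarrow> \<not> meager_in cantor_topology ((\<lambda>A n. n \<in> A) ` F)"

text \<open>The space xi(F) on nat option, None playing the role of the point infinity.\<close>
definition xi_topology :: "nat set set \<Rightarrow> nat option topology" where
  "xi_topology F = topology (\<lambda>U. None \<in> U \<longrightarrow> (\<exists>A\<in>F. Some ` A \<subseteq> U))"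

definition Cp :: "'a topology \<Rightarrow> ('a \<Rightarrow> real) topology" where
  "Cp X = subtopology (product_topology (\<lambda>_. euclideanreal) UNIV)
                      {f. continuous_map X euclideanreal f}"

definition crowded_in :: "'a topology \<Rightarrow> 'a set \<Rightarrow> bool" where
  "crowded_in X P \<longleftrightarrow> P \<noteq> {} \<and> P \<subseteq> topspace X \<and> P \<subseteq> X derived_set_of P"

end

theory Submission
  imports Defs
begin

lemma box_lemma:
  fixes f :: "nat option \<Rightarrow> real"
  assumes "openin (product_topology (\<lambda>_. euclideanreal) UNIV) V" "f \<in> V"
  shows "\<exists>e>0. \<exists>N. \<forall>g. (\<bar>g None - f None\<bar> < e \<and> (\<forall>i<N. \<bar>g (Some i) - f (Some i)\<bar> < e)) \<longrightarrow> g \<in> V"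
proof -
  obtain U where fin: "finite {i. U i \<noteq> UNIV}" and op: "\<And>i. open (U i)"
    and fU: "f \<in> Pi\<^sub>E UNIV U" and UV: "Pi\<^sub>E UNIV U \<subseteq> V"
    using assms unfolding openin_product_topology_alt by force
  define T where "T = {i. U i \<noteq> UNIV}"
  have "\<forall>i. \<exists>e>0. \<forall>y. \<bar>y - f i\<bar> < e \<longrightarrow> y \<in> U i"
  proof
    fix i
    have "f i \<in> U i" using fU by auto
    then obtain e where "e>0" "ball (f i) e \<subseteq> U i" using op open_contains_ball by blast
    then show "\<exists>e>0. \<forall>y. \<bar>y - f i\<bar> < e \<longrightarrow> y \<in> U i"
      by (intro exI[of _ e]) (auto simp: dist_real_def abs_minus_commute subset_iff)
  qed
  then obtain ee where ee: "\<And>i. ee i > 0" "\<And>i y. \<bar>y - f i\<bar> < ee i \<Longrightarrow> y \<in> U i"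
    by metis
  define e where "e = Min (insert 1 (ee ` T))"
  have finT: "finite T" using fin T_def by simp
  have e0: "e > 0" unfolding e_def using finT ee(1) by auto
  have eT: "i \<in> T \<Longrightarrow> e \<le> ee i" for i unfolding e_def using finT by auto
  have finS: "finite (Some -` T)" using finT by (simp add: finite_vimageI)
  define N where "N = Suc (Max (insert 0 (Some -` T)))"
  have NS: "Some n \<in> T \<Longrightarrow> n < N" for n unfolding N_def using finS
    by (simp add: le_imp_less_Suc)
  show ?thesis
  proof (intro exI[of _ e] conjI e0 exI[of _ N] allI impI)
    fix g assume g: "\<bar>g None - f None\<bar> < e \<and> (\<forall>i<N. \<bar>g (Some i) - f (Some i)\<bar> < e)"
    have "g i \<in> U i" for i
    proof (cases "i \<in> T")
      case False then show ?thesis by (simp add: T_def)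
    next
      case True
      then have "\<bar>g i - f i\<bar> < e"
        using g NS by (cases i) auto
      then show ?thesis using ee(2) eT[OF True] by force
    qed
    then show "g \<in> V" using UV by auto
  qed
qed

lemma cantor_box:
  assumes "openin cantor_topology U" "x \<in> U"
  shows "\<exists>N. \<forall>y. (\<forall>i<N. y i = x i) \<longrightarrow> y \<in> U"
proof -
  obtain W where fin: "finite {i. W i \<noteq> UNIV}"
    and xW: "x \<in> Pi\<^sub>E UNIV W" and WU: "Pi\<^sub>E UNIV W \<subseteq> U"
    using assms unfolding openin_product_topology_alt cantor_topology_def by force
  define N where "N = Suc (Max (insert 0 {i. W i \<noteq> UNIV}))"
  have NS: "W i \<noteq> UNIV \<Longrightarrow> i < N" for i unfolding N_def using fin
    by (simp add: le_imp_less_Suc)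
  show ?thesis
  proof (intro exI[of _ N] allI impI)
    fix y assume y: "\<forall>i<N. y i = x i"
    have "y i \<in> W i" for i
      using NS[of i] y xW by (cases "W i = UNIV") auto
    then show "y \<in> U" using WU by auto
  qed
qed


lemma istop_xi:
  assumes "is_filter_on_nat F"
  shows "istopology (\<lambda>U. None \<in> U \<longrightarrow> (\<exists>A\<in>F. Some ` A \<subseteq> U))"
  unfolding istopology_def
proof (intro conjI allI impI)
  fix S T :: "nat option set"
  assume S: "None \<in> S \<longrightarrow> (\<exists>A\<in>F. Some ` A \<subseteq> S)" and T: "None \<in> T \<longrightarrow> (\<exists>A\<in>F. Some ` A \<subseteq> T)"
    and "None \<in> S \<inter> T"
  then obtain A B where "A \<in> F" "B \<in> F" "Some ` A \<subseteq> S" "Some ` B \<subseteq> T" by auto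
  moreover have "A \<inter> B \<in> F" using assms \<open>A \<in> F\<close> \<open>B \<in> F\<close> unfolding is_filter_on_nat_def by blast
  ultimately show "\<exists>A\<in>F. Some ` A \<subseteq> S \<inter> T" by (intro bexI[of _ "A \<inter> B"]) auto
next
  fix K :: "nat option set set"
  assume K: "\<forall>S\<in>K. None \<in> S \<longrightarrow> (\<exists>A\<in>F. Some ` A \<subseteq> S)" and "None \<in> \<Union>K"
  then obtain S where "S \<in> K" "None \<in> S" by auto
  then obtain A where "A \<in> F" "Some ` A \<subseteq> S" using K by auto
  then show "\<exists>A\<in>F. Some ` A \<subseteq> \<Union>K" using \<open>S \<in> K\<close> by blast
qed

lemma openin_xi:
  assumes "is_filter_on_nat F"
  shows "openin (xi_topology F) U \<longleftrightarrow> (None \<in> U \<longrightarrow> (\<exists>A\<in>F. Some ` A \<subseteq> U))"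
  unfolding xi_topology_def using istop_xi[OF assms] by simp

lemma topspace_xi:
  assumes "is_filter_on_nat F"
  shows "topspace (xi_topology F) = UNIV"
proof -
  have "UNIV \<in> F" using assms unfolding is_filter_on_nat_def by blast
  then have "openin (xi_topology F) UNIV" using openin_xi[OF assms] by blast
  then show ?thesis using openin_subset by blast
qed

lemma cont_xi:
  assumes F: "is_filter_on_nat F"
    and g: "\<And>e. e > 0 \<Longrightarrow> \<exists>A\<in>F. \<forall>n\<in>A. \<bar>g (Some n) - g None\<bar> < e"
  shows "continuous_map (xi_topology F) euclideanreal g"
  unfolding continuous_map_def
proof (intro conjI allI impI)
  show "g \<in> topspace (xi_topology F) \<rightarrow> topspace euclideanreal" by simp
  fix U :: "real set" assume "openin euclideanreal U"
  then have oU: "open U" by simp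
  show "openin (xi_topology F) {x \<in> topspace (xi_topology F). g x \<in> U}"
    unfolding openin_xi[OF F]
  proof
    assume "None \<in> {x \<in> topspace (xi_topology F). g x \<in> U}"
    then have "g None \<in> U" by simp
    then obtain e where e: "e > 0" "ball (g None) e \<subseteq> U" using oU open_contains_ball by blast
    obtain A where A: "A \<in> F" "\<forall>n\<in>A. \<bar>g (Some n) - g None\<bar> < e" using g[OF e(1)] by blast
    have "Some ` A \<subseteq> {x \<in> topspace (xi_topology F). g x \<in> U}"
    proof
      fix x assume "x \<in> Some ` A"
      then obtain n where "n \<in> A" "x = Some n" by auto
      then have "g x \<in> ball (g None) e" using A(2) by (auto simp: dist_real_def abs_minus_commute)
      then show "x \<in> {x \<in> topspace (xi_topology F). g x \<in> U}" using e(2) topspace_xi[OF F] by auto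
    qed
    then show "\<exists>A\<in>F. Some ` A \<subseteq> {x \<in> topspace (xi_topology F). g x \<in> U}" using A(1) by blast
  qed
qed

lemma topspace_Cp: "topspace (Cp X) = {f. continuous_map X euclideanreal f}"
  unfolding Cp_def by simp

lemma openin_Cp: "openin (Cp X) T \<longleftrightarrow> (\<exists>V. openin (product_topology (\<lambda>_. euclideanreal) UNIV) V \<and> T = V \<inter> {f. continuous_map X euclideanreal f})"
  unfolding Cp_def openin_subtopology by simp

lemma box_open:
  fixes p :: "nat option \<Rightarrow> real"
  shows "openin (product_topology (\<lambda>_. euclideanreal) UNIV)
     {g. \<bar>g None - p None\<bar> < e \<and> (\<forall>i<N. \<bar>g (Some i) - p (Some i)\<bar> < e)}"
proof -
  define Fam where "Fam = (\<lambda>x. {g \<in> topspace (product_topology (\<lambda>_. euclideanreal) UNIV). g x \<in> ball (p x) e}) ` (insert None (Some ` {..<N}))"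
  have "openin (product_topology (\<lambda>_. euclideanreal) UNIV) (\<Inter>Fam)"
  proof (rule openin_Inter)
    show "finite Fam" unfolding Fam_def by simp
    show "Fam \<noteq> {}" unfolding Fam_def by simp
    fix X assume "X \<in> Fam"
    then obtain x where "X = {g \<in> topspace (product_topology (\<lambda>_. euclideanreal) UNIV). g x \<in> ball (p x) e}"
      unfolding Fam_def by auto
    then show "openin (product_topology (\<lambda>_. euclideanreal) UNIV) X"
      using openin_continuous_map_preimage[OF continuous_map_product_projection[of x UNIV "\<lambda>_. euclideanreal"], of "ball (p x) e"]
      by simp
  qed
  moreover have "\<Inter>Fam = {g. \<bar>g None - p None\<bar> < e \<and> (\<forall>i<N. \<bar>g (Some i) - p (Some i)\<bar> < e)}"
    unfolding Fam_def by (auto simp: dist_real_def abs_minus_commute)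
  ultimately show ?thesis by simp
qed

lemma nonmeager_miss:
  assumes nm: "non_meager_family F" and s: "\<And>k. s k < s (Suc k)"
  shows "\<exists>A\<in>F. \<forall>m. \<exists>k\<ge>m. \<forall>n. s k \<le> n \<and> n < s (Suc k) \<longrightarrow> n \<notin> A"
proof (rule ccontr)
  assume H0: "\<not> ?thesis"
  have H: "\<forall>A\<in>F. \<exists>m. \<forall>k\<ge>m. \<exists>n. s k \<le> n \<and> n < s (Suc k) \<and> n \<in> A"
    using H0 by simp
  have sk: "k \<le> s k" for k
  proof (induction k)
    case (Suc k) then show ?case using s[of k] by simp
  qed simp
  define M :: "nat \<Rightarrow> (nat \<Rightarrow> bool) set" where "M m = {ch. \<forall>k\<ge>m. \<exists>n. s k \<le> n \<and> n < s (Suc k) \<and> ch n}" for m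
  have top: "topspace cantor_topology = UNIV" unfolding cantor_topology_def by simp
  have nd: "nowhere_dense_in cantor_topology (M m)" for m
    unfolding nowhere_dense_in_def
  proof
    show "M m \<subseteq> topspace cantor_topology" using top by simp
    show "cantor_topology interior_of (cantor_topology closure_of M m) = {}"
    proof (rule ccontr)
      assume "cantor_topology interior_of (cantor_topology closure_of M m) \<noteq> {}"
      then obtain x where x: "x \<in> cantor_topology interior_of (cantor_topology closure_of M m)" by blast
      obtain N where N: "\<And>y. (\<forall>i<N. y i = x i) \<Longrightarrow> y \<in> cantor_topology interior_of (cantor_topology closure_of M m)"
        using cantor_box[OF openin_interior_of x] by blast
      define k where "k = max m N"
      define y where "y = (\<lambda>i. if i < N then x i else False)"
      have "y \<in> cantor_topology closure_of M m"
        using N[of y] interior_of_subset y_def by fastforce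
      moreover define T :: "(nat \<Rightarrow> bool) set" where "T = {ch. \<forall>n. s k \<le> n \<and> n < s (Suc k) \<longrightarrow> \<not> ch n}"
      have "openin cantor_topology T"
      proof -
        define Fam where "Fam = (\<lambda>n. {ch \<in> topspace cantor_topology. ch n \<in> {False}}) ` {s k..<s (Suc k)}"
        have "openin cantor_topology (\<Inter>Fam)"
        proof (rule openin_Inter)
          show "finite Fam" unfolding Fam_def by simp
          show "Fam \<noteq> {}" unfolding Fam_def using s[of k] by simp
          fix X assume "X \<in> Fam"
          then obtain n where "X = {ch \<in> topspace cantor_topology. ch n \<in> {False}}"
            unfolding Fam_def by auto
          then show "openin cantor_topology X"
            using openin_continuous_map_preimage[OF continuous_map_product_projection[of n UNIV "\<lambda>_. discrete_topology (UNIV::bool set)"], of "{False}"]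
            by (simp add: cantor_topology_def)
        qed
        moreover have "\<Inter>Fam = T" unfolding Fam_def T_def using top by auto
        ultimately show ?thesis by simp
      qed
      moreover have "y \<in> T" unfolding T_def y_def k_def using sk[of "max m N"] by auto
      ultimately obtain z where "z \<in> M m" "z \<in> T" unfolding in_closure_of by blast
      have "k \<ge> m" unfolding k_def by simp
      then have "\<exists>n. s k \<le> n \<and> n < s (Suc k) \<and> z n" using \<open>z \<in> M m\<close> unfolding M_def by simp
      then obtain n where "s k \<le> n" "n < s (Suc k)" "z n" by blast
      then show False using \<open>z \<in> T\<close> unfolding T_def by simp
    qed
  qed
  have "meager_in cantor_topology ((\<lambda>A n. n \<in> A) ` F)"
    unfolding meager_in_def
  proof (intro exI[of _ "range M"] conjI)
    show "countable (range M)" by simp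
    show "\<forall>N\<in>range M. nowhere_dense_in cantor_topology N" using nd by blast
    show "(\<lambda>A n. n \<in> A) ` F \<subseteq> \<Union> (range M)"
    proof
      fix ch assume "ch \<in> (\<lambda>A n. n \<in> A) ` F"
      then obtain A where AF: "A \<in> F" and chA: "ch = (\<lambda>n. n \<in> A)" by blast
      obtain m where mA: "\<forall>k\<ge>m. \<exists>n. s k \<le> n \<and> n < s (Suc k) \<and> n \<in> A"
        using bspec[OF H AF] by (elim exE) 
      have "ch \<in> M m" unfolding M_def chA using mA by simp
      then show "ch \<in> \<Union> (range M)" by blast
    qed
  qed
  then show False using nm unfolding non_meager_family_def by simp
qed


definition w :: "nat \<Rightarrow> real" where "w m = (1/2)^m"

lemma w_pos: "w m > 0" unfolding w_def by simp
lemma w_le1: "w m \<le> 1" unfolding w_def by (simp add: power_le_one)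
lemma w_Suc: "w (Suc m) = w m / 2" unfolding w_def by simp
lemma w_mono: "m \<le> m' \<Longrightarrow> w m' \<le> w m" unfolding w_def by (simp add: power_decreasing)
lemma w_less: "n < m \<Longrightarrow> 2 * w m \<le> w n"
proof -
  assume "n < m"
  then have "Suc n \<le> m" by simp
  then have "w m \<le> w (Suc n)" by (rule w_mono)
  then show ?thesis by (simp add: w_Suc)
qed
lemma w_small: "e > 0 \<Longrightarrow> \<exists>N. w N < e"
  unfolding w_def using real_arch_pow_inv[of e "1/2"] by auto

locale constr =
  fixes P :: "(nat option \<Rightarrow> real) set"
    and a :: "(nat option \<Rightarrow> real) \<Rightarrow> nat \<Rightarrow> (nat option \<Rightarrow> real)"
    and b :: "(nat option \<Rightarrow> real) \<Rightarrow> nat"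
    and p0 :: "nat option \<Rightarrow> real"
  assumes p0: "p0 \<in> P"
    and a_in: "p \<in> P \<Longrightarrow> a p m \<in> P"
    and a_ne: "p \<in> P \<Longrightarrow> a p m \<noteq> p"
    and a_None: "p \<in> P \<Longrightarrow> \<bar>a p m None - p None\<bar> < w m / 4"
    and a_Some: "p \<in> P \<Longrightarrow> i < m \<Longrightarrow> \<bar>a p m (Some i) - p (Some i)\<bar> < w m / 4"
    and b: "q \<in> P \<Longrightarrow> b q \<le> n \<Longrightarrow> q (Some n) = q None"
begin

primrec GN :: "nat \<Rightarrow> (nat option \<Rightarrow> real) set \<times> nat" where
  "GN 0 = ({p0}, b p0)"
| "GN (Suc k) = (let G' = fst (GN k) \<union> (\<lambda>p. a p (snd (GN k))) ` fst (GN k)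
                  in (G', max (Suc (snd (GN k))) (Max (b ` G'))))"

definition G where "G k = fst (GN k)"
definition nn where "nn k = snd (GN k)"

lemma G0: "G 0 = {p0}" and nn0: "nn 0 = b p0"
  unfolding G_def nn_def by simp_all

lemma G_Suc: "G (Suc k) = G k \<union> (\<lambda>p. a p (nn k)) ` G k"
  unfolding G_def nn_def by (simp add: Let_def)

lemma nn_Suc: "nn (Suc k) = max (Suc (nn k)) (Max (b ` G (Suc k)))"
  unfolding G_def nn_def by (simp add: Let_def)

lemma G_fin: "finite (G k)"
  by (induction k) (simp_all add: G0 G_Suc)

lemma G_P: "G k \<subseteq> P"
  by (induction k) (auto simp: G0 G_Suc p0 a_in)

lemma nn_less: "nn k < nn (Suc k)"
  by (simp add: nn_Suc)

lemma nn_ge: "k \<le> nn k"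
proof (induction k)
  case (Suc k) then show ?case using nn_less[of k] by simp
qed simp

lemma nn_mono: "j \<le> k \<Longrightarrow> nn j \<le> nn k"
  using nn_less by (metis lift_Suc_mono_le less_imp_le)

lemma G_mono: "j \<le> k \<Longrightarrow> G j \<subseteq> G k"
  by (rule lift_Suc_mono_le[of G]) (auto simp: G_Suc)

lemma G_b: "p \<in> G k \<Longrightarrow> b p \<le> nn k"
proof (cases k)
  case 0 then show "p \<in> G k \<Longrightarrow> b p \<le> nn k" by (simp add: G0 nn0)
next
  case (Suc k')
  assume "p \<in> G k"
  then have "b p \<le> Max (b ` G k)" using G_fin by simp
  then show ?thesis using Suc nn_Suc by simp
qed

lemma G_a: "p \<in> G k \<Longrightarrow> a p (nn k) \<in> G (Suc k)"
  by (simp add: G_Suc)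

inductive_set R :: "nat set \<Rightarrow> ((nat option \<Rightarrow> real) \<times> nat) set" for A where
  base: "(p0, 0) \<in> R A"
| step: "(p, j) \<in> R A \<Longrightarrow> j \<le> k \<Longrightarrow> (\<forall>n. nn k \<le> n \<and> n < nn (Suc k) \<longrightarrow> n \<notin> A)
          \<Longrightarrow> (a p (nn k), Suc k) \<in> R A"

lemma R_G: "(q, j) \<in> R A \<Longrightarrow> q \<in> G j"
proof (induction rule: R.induct)
  case base then show ?case by (simp add: G0)
next
  case (step p j k)
  then have "p \<in> G k" using G_mono by blast
  then show ?case by (rule G_a)
qed

lemma R_P: "(q, j) \<in> R A \<Longrightarrow> q \<in> P"
  using R_G G_P by blast

lemma R_equi: "(q, j) \<in> R A \<Longrightarrow> nn 0 \<le> n \<Longrightarrow> n \<in> A \<Longrightarrow>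
    \<bar>q (Some n) - q None\<bar> \<le> max 0 (w n - w (nn j))"
proof (induction arbitrary: n rule: R.induct)
  case base
  then show ?case using b[OF p0, of n] by (simp add: nn0)
next
  case (step p j k)
  define q where "q = a p (nn k)"
  have pP: "p \<in> P" using step.hyps(1) R_P by blast
  have qG: "q \<in> G (Suc k)" unfolding q_def using step.hyps(1) R_G G_mono[OF step.hyps(2)] G_a by blast
  show ?case
  proof (cases "nn (Suc k) \<le> n")
    case True
    have "b q \<le> n" using G_b[OF qG] True by simp
    have "q (Some n) = q None" unfolding q_def
      by (rule b[OF a_in[OF pP]]) (use \<open>b q \<le> n\<close> q_def in simp)
    then show ?thesis unfolding q_def by simp
  next
    case False
    then have nk: "n < nn k" using step.hyps(3) step.prems(2) by (meson not_le)
    have d1: "\<bar>q (Some n) - p (Some n)\<bar> < w (nn k) / 4" unfolding q_def using a_Some[OF pP nk] .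
    have d2: "\<bar>q None - p None\<bar> < w (nn k) / 4" unfolding q_def using a_None[OF pP] .
    have IH: "\<bar>p (Some n) - p None\<bar> \<le> max 0 (w n - w (nn j))" using step.IH step.prems by blast
    have wj: "w (nn k) \<le> w (nn j)" using w_mono nn_mono step.hyps(2) by blast
    have wk: "w (nn (Suc k)) \<le> w (nn k) / 2"
      using w_mono[of "Suc (nn k)" "nn (Suc k)"] nn_less[of k] w_Suc by simp
    have wn: "2 * w (nn k) \<le> w n" using w_less[OF nk] .
    have "\<bar>q (Some n) - q None\<bar> \<le> \<bar>p (Some n) - p None\<bar> + w (nn k) / 2"
      using d1 d2 by linarith
    also have "\<dots> \<le> w n - w (nn (Suc k))"
    proof (cases "n < nn j")
      case True
      then have "max 0 (w n - w (nn j)) = w n - w (nn j)"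
        using w_mono[of n "nn j"] by simp
      then show ?thesis using IH wj wk by linarith
    next
      case False
      then have "max 0 (w n - w (nn j)) = 0"
        using w_mono[of "nn j" n] by simp
      then show ?thesis using IH wn wk w_pos[of "nn k"] by linarith
    qed
    finally show ?thesis unfolding q_def by simp
  qed
qed

lemma R_bound:
  assumes thr: "\<And>k p. t \<le> k \<Longrightarrow> p \<in> P \<Longrightarrow> \<bar>a p (nn k) x - p x\<bar> < w (nn k) / 4"
  shows "(q, j) \<in> R A \<Longrightarrow> \<bar>q x\<bar> \<le> Max ((\<lambda>p. \<bar>p x\<bar>) ` G t) + 1 - w (nn j)"
proof (induction rule: R.induct)
  case base
  have "p0 \<in> G t" using G0 G_mono[of 0 t] by auto
  then have "\<bar>p0 x\<bar> \<le> Max ((\<lambda>p. \<bar>p x\<bar>) ` G t)" using G_fin by simp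
  then show ?case using w_le1[of "nn 0"] by simp
next
  case (step p j k)
  define q where "q = a p (nn k)"
  have pP: "p \<in> P" using step.hyps(1) R_P by blast
  have qG: "q \<in> G (Suc k)" unfolding q_def using step.hyps(1) R_G G_mono[OF step.hyps(2)] G_a by blast
  show ?case
  proof (cases "Suc k \<le> t")
    case True
    then have "q \<in> G t" using qG G_mono by blast
    then have "\<bar>q x\<bar> \<le> Max ((\<lambda>p. \<bar>p x\<bar>) ` G t)" using G_fin by simp
    then show ?thesis using w_le1[of "nn (Suc k)"] unfolding q_def by simp
  next
    case False
    then have "\<bar>q x - p x\<bar> < w (nn k) / 4" unfolding q_def using thr pP by simp
    moreover have "w (nn k) \<le> w (nn j)" using w_mono nn_mono step.hyps(2) by blast
    moreover have "w (nn (Suc k)) \<le> w (nn k) / 2"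
      using w_mono[of "Suc (nn k)" "nn (Suc k)"] nn_less[of k] w_Suc by simp
    ultimately show ?thesis using step.IH unfolding q_def by linarith
  qed
qed

definition tt :: "nat option \<Rightarrow> nat" where
  "tt x = (case x of None \<Rightarrow> 0 | Some n \<Rightarrow> Suc n)"

definition r :: "nat option \<Rightarrow> real" where
  "r x = Max ((\<lambda>p. \<bar>p x\<bar>) ` G (tt x)) + 1"

lemma R_r: "(q, j) \<in> R A \<Longrightarrow> \<bar>q x\<bar> \<le> r x"
proof -
  assume qR: "(q, j) \<in> R A"
  have "\<bar>a p (nn k) x - p x\<bar> < w (nn k) / 4" if "tt x \<le> k" "p \<in> P" for k p
  proof (cases x)
    case None then show ?thesis using a_None[OF that(2)] by simp
  next
    case (Some n)
    then have "n < nn k" using that(1) nn_ge[of k] unfolding tt_def by simp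
    then show ?thesis using a_Some[OF that(2)] Some by simp
  qed
  then have "\<bar>q x\<bar> \<le> Max ((\<lambda>p. \<bar>p x\<bar>) ` G (tt x)) + 1 - w (nn j)"
    using R_bound[of "tt x" x q j A] qR by blast
  then show ?thesis unfolding r_def using w_pos[of "nn j"] by simp
qed

lemma R_approx:
  assumes unb: "\<forall>m. \<exists>k\<ge>m. \<forall>n. nn k \<le> n \<and> n < nn (Suc k) \<longrightarrow> n \<notin> A"
    and qR: "(q, j) \<in> R A" and e: "e > 0"
  shows "\<exists>y k. (y, k) \<in> R A \<and> y \<noteq> q \<and> \<bar>y None - q None\<bar> < e \<and> (\<forall>i<N. \<bar>y (Some i) - q (Some i)\<bar> < e)"
proof -
  obtain M where M: "w M < e" using w_small[OF e] by blast
  obtain k where k: "k \<ge> max (max j N) M" "\<forall>n. nn k \<le> n \<and> n < nn (Suc k) \<longrightarrow> n \<notin> A"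
    using unb by blast
  have qP: "q \<in> P" using qR R_P by blast
  have yR: "(a q (nn k), Suc k) \<in> R A" using R.step[OF qR _ k(2)] k(1) by simp
  have wk: "w (nn k) \<le> w M" using w_mono[of M "nn k"] nn_ge[of k] k(1) by simp
  show ?thesis
  proof (intro exI conjI allI impI)
    show "(a q (nn k), Suc k) \<in> R A" by (rule yR)
    show "a q (nn k) \<noteq> q" using a_ne[OF qP] .
    show "\<bar>a q (nn k) None - q None\<bar> < e" using a_None[OF qP, of "nn k"] wk M w_pos[of "nn k"] by linarith
    fix i assume "i < N"
    then have "i < nn k" using nn_ge[of k] k(1) by simp
    then show "\<bar>a q (nn k) (Some i) - q (Some i)\<bar> < e" using a_Some[OF qP, of i "nn k"] wk M w_pos[of "nn k"] by linarith
  qed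
qed

end


definition enc :: "rat list \<times> rat \<Rightarrow> nat option \<Rightarrow> real" where
  "enc = (\<lambda>(xs, c) x. case x of None \<Rightarrow> of_rat c
            | Some n \<Rightarrow> if n < length xs then of_rat (xs ! n) else of_rat c)"

lemma enc_ev: "length (fst z) \<le> n \<Longrightarrow> enc z (Some n) = enc z None"
  by (cases z) (simp add: enc_def)

lemma rat_approx: "e > 0 \<Longrightarrow> \<exists>r::rat. \<bar>of_rat r - (y::real)\<bar> < e"
proof -
  assume "e > 0"
  then obtain q where "q \<in> \<rat>" "y - e < q" "q < y + e" using Rats_dense_in_real[of "y - e" "y + e"] by auto
  then obtain r where "q = of_rat r" by (auto elim: Rats_cases)
  then show ?thesis using \<open>y - e < q\<close> \<open>q < y + e\<close> by (intro exI[of _ r]) auto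
qed

theorem mainTheorem9:
  fixes F :: "nat set set"
  assumes "free_filter F" and "non_meager_family F"
  shows "\<exists>D. countable D \<and> D \<subseteq> topspace (Cp (xi_topology F)) \<and>
             Cp (xi_topology F) closure_of D = topspace (Cp (xi_topology F)) \<and>
             (\<forall>P. P \<subseteq> D \<longrightarrow> crowded_in (Cp (xi_topology F)) P \<longrightarrow>
                (\<exists>Q. Q \<subseteq> P \<and> crowded_in (Cp (xi_topology F)) Q \<and>
                     compactin (Cp (xi_topology F)) (Cp (xi_topology F) closure_of Q)))"
proof -
  have Ff: "is_filter_on_nat F" using assms(1) unfolding free_filter_def by blast
  have cof: "{N..} \<in> F" for N
  proof -
    have "UNIV - {N..} = {..<N}" by auto
    then show ?thesis using assms(1) unfolding free_filter_def by simp
  qed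
  have Fint: "A \<in> F \<Longrightarrow> B \<in> F \<Longrightarrow> A \<inter> B \<in> F" for A B using Ff unfolding is_filter_on_nat_def by blast
  let ?X = "xi_topology F"
  let ?C = "{f. continuous_map ?X euclideanreal f}"
  let ?PT = "product_topology (\<lambda>_::nat option. euclideanreal) UNIV"
  have topC: "topspace (Cp ?X) = ?C" by (rule topspace_Cp)
  define D where "D = range enc"
  have cD: "countable D" unfolding D_def by simp
  have evc: "g \<in> ?C" if "\<And>n. N \<le> n \<Longrightarrow> g (Some n) = g None" for g N
  proof -
    have "continuous_map ?X euclideanreal g"
    proof (rule cont_xi[OF Ff])
      fix e :: real assume "e > 0"
      then show "\<exists>A\<in>F. \<forall>n\<in>A. \<bar>g (Some n) - g None\<bar> < e"
        using that cof[of N] by (intro bexI[of _ "{N..}"]) auto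
    qed
    then show ?thesis by simp
  qed
  have DC: "D \<subseteq> ?C"
  proof
    fix d assume "d \<in> D"
    then obtain z where "d = enc z" unfolding D_def by blast
    then show "d \<in> ?C" using evc[of "length (fst z)" d] enc_ev by blast
  qed
  have dense: "Cp ?X closure_of D = topspace (Cp ?X)"
  proof
    show "Cp ?X closure_of D \<subseteq> topspace (Cp ?X)" by (rule closure_of_subset_topspace)
    show "topspace (Cp ?X) \<subseteq> Cp ?X closure_of D"
    proof
      fix f assume fC: "f \<in> topspace (Cp ?X)"
      show "f \<in> Cp ?X closure_of D"
        unfolding in_closure_of
      proof (intro conjI allI impI fC)
        fix T assume "f \<in> T \<and> openin (Cp ?X) T"
        then obtain V where V: "openin ?PT V" "T = V \<inter> ?C" "f \<in> V"
          unfolding openin_Cp by blast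
        obtain e N where e: "e > 0" and eV: "\<And>g. \<bar>g None - f None\<bar> < e \<and> (\<forall>i<N. \<bar>g (Some i) - f (Some i)\<bar> < e) \<Longrightarrow> g \<in> V"
          using box_lemma[OF V(1) V(3)] by blast
        define xs where "xs = map (\<lambda>i. SOME r::rat. \<bar>of_rat r - f (Some i)\<bar> < e) [0..<N]"
        define c where "c = (SOME r::rat. \<bar>of_rat r - f None\<bar> < e)"
        have "\<bar>of_rat c - f None\<bar> < e" unfolding c_def using someI_ex[OF rat_approx[OF e]] .
        moreover have "\<bar>of_rat (xs ! i) - f (Some i)\<bar> < e" if "i < N" for i
          unfolding xs_def using someI_ex[OF rat_approx[OF e]] that by simp
        ultimately have "enc (xs, c) \<in> V" using eV by (auto simp: enc_def xs_def)
        moreover have "enc (xs, c) \<in> D" unfolding D_def by simp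
        ultimately show "\<exists>y. y \<in> D \<and> y \<in> T" using V(2) DC by blast
      qed
    qed
  qed
  have main: "\<exists>Q. Q \<subseteq> P \<and> crowded_in (Cp ?X) Q \<and> compactin (Cp ?X) (Cp ?X closure_of Q)"
    if PD: "P \<subseteq> D" and cr: "crowded_in (Cp ?X) P" for P
  proof -
    from cr obtain p0 where p0: "p0 \<in> P" unfolding crowded_in_def by blast
    have PC: "P \<subseteq> ?C" using PD DC by blast
    define \<Phi> :: "(nat option \<Rightarrow> real) \<Rightarrow> nat \<Rightarrow> (nat option \<Rightarrow> real) \<Rightarrow> bool" where "\<Phi> p m y \<longleftrightarrow> y \<in> P \<and> y \<noteq> p \<and> \<bar>y None - p None\<bar> < w m / 4 \<and> (\<forall>i<m. \<bar>y (Some i) - p (Some i)\<bar> < w m / 4)" for p m y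
    have exa: "\<exists>y. \<Phi> p m y" if "p \<in> P" for p m
    proof -
      have pd: "p \<in> Cp ?X derived_set_of P" using cr that unfolding crowded_in_def by blast
      define T where "T = {g. \<bar>g None - p None\<bar> < w m / 4 \<and> (\<forall>i<m. \<bar>g (Some i) - p (Some i)\<bar> < w m / 4)} \<inter> ?C"
      have "openin (Cp ?X) T" unfolding openin_Cp T_def using box_open by blast
      moreover have "p \<in> T" unfolding T_def using that PC w_pos[of m] by auto
      ultimately obtain y where "y \<noteq> p" "y \<in> P" "y \<in> T" using pd unfolding in_derived_set_of by blast
      then show ?thesis unfolding \<Phi>_def T_def by blast
    qed
    define a :: "(nat option \<Rightarrow> real) \<Rightarrow> nat \<Rightarrow> (nat option \<Rightarrow> real)" where "a p m = (SOME y. \<Phi> p m y)" for p m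
    have aP: "\<Phi> p m (a p m)" if "p \<in> P" for p m unfolding a_def using someI_ex[OF exa[OF that]] .
    define b :: "(nat option \<Rightarrow> real) \<Rightarrow> nat" where "b q = (LEAST N. \<forall>n\<ge>N. q (Some n) = q None)" for q
    have bP: "q (Some n) = q None" if qP: "q \<in> P" and bqn: "b q \<le> n" for q n
    proof -
      obtain z where "q = enc z" using qP PD unfolding D_def by blast
      then have "\<exists>N. \<forall>n\<ge>N. q (Some n) = q None" using enc_ev by blast
      then have "\<forall>n\<ge>b q. q (Some n) = q None" unfolding b_def by (rule LeastI_ex)
      then show ?thesis using bqn by blast
    qed
    interpret constr P a b p0
      by unfold_locales (use p0 aP bP in \<open>auto simp: \<Phi>_def\<close>)
    obtain A where A: "A \<in> F" and unb: "\<forall>m. \<exists>k\<ge>m. \<forall>n. nn k \<le> n \<and> n < nn (Suc k) \<longrightarrow> n \<notin> A"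
      using nonmeager_miss[OF assms(2), of nn] nn_less by blast
    define Q where "Q = fst ` R A"
    have QP: "Q \<subseteq> P" unfolding Q_def using R_P by force
    have crQ: "crowded_in (Cp ?X) Q"
      unfolding crowded_in_def
    proof (intro conjI)
      show "Q \<noteq> {}" unfolding Q_def using R.base[of A] by blast
      show QT: "Q \<subseteq> topspace (Cp ?X)" using QP PC topC by blast
      show "Q \<subseteq> Cp ?X derived_set_of Q"
      proof
        fix q assume "q \<in> Q"
        then obtain j where qR: "(q, j) \<in> R A" unfolding Q_def by force
        show "q \<in> Cp ?X derived_set_of Q"
          unfolding in_derived_set_of
        proof (intro conjI allI impI)
          show "q \<in> topspace (Cp ?X)" using QT \<open>q \<in> Q\<close> by blast
          fix T assume "q \<in> T \<and> openin (Cp ?X) T"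
          then obtain V where V: "openin ?PT V" "T = V \<inter> ?C" "q \<in> V"
            unfolding openin_Cp by blast
          obtain e N where e: "e > 0" and eV: "\<And>g. \<bar>g None - q None\<bar> < e \<and> (\<forall>i<N. \<bar>g (Some i) - q (Some i)\<bar> < e) \<Longrightarrow> g \<in> V"
            using box_lemma[OF V(1) V(3)] by blast
          obtain y k where y: "(y, k) \<in> R A" "y \<noteq> q" "\<bar>y None - q None\<bar> < e" "\<forall>i<N. \<bar>y (Some i) - q (Some i)\<bar> < e"
            using R_approx[OF unb qR e, of N] by blast
          have "y \<in> Q" unfolding Q_def using y(1) by force
          moreover have "y \<in> T" using V(2) eV y QP PC \<open>y \<in> Q\<close> by blast
          ultimately show "\<exists>y. y \<noteq> q \<and> y \<in> Q \<and> y \<in> T" using y(2) by blast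
        qed
      qed
    qed
    define E where "E = {g::nat option \<Rightarrow> real. \<forall>n. nn 0 \<le> n \<and> n \<in> A \<longrightarrow> \<bar>g (Some n) - g None\<bar> \<le> w n}"
    define K where "K = E \<inter> Pi\<^sub>E UNIV (\<lambda>x. {- r x..r x})"
    have Ecl: "closedin ?PT E"
    proof -
      define Fam where "Fam = insert (topspace ?PT) ((\<lambda>n. {g \<in> topspace ?PT. (\<lambda>g. g (Some n) - g None) g \<in> {- w n..w n}}) ` {n. nn 0 \<le> n \<and> n \<in> A})"
      have "closedin ?PT (\<Inter>Fam)"
      proof (rule closedin_Inter)
        show "Fam \<noteq> {}" unfolding Fam_def by simp
        fix S assume "S \<in> Fam"
        then consider "S = topspace ?PT" | n where "S = {g \<in> topspace ?PT. (\<lambda>g. g (Some n) - g None) g \<in> {- w n..w n}}"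
          unfolding Fam_def by blast
        then show "closedin ?PT S"
        proof cases
          case 1 then show ?thesis using closedin_topspace[of ?PT] by simp
        next
          case 2
          have "continuous_map ?PT euclideanreal (\<lambda>g. g (Some n) - g None)"
            by (intro continuous_map_diff continuous_map_product_projection) auto
          then show ?thesis using 2 closedin_continuous_map_preimage[of ?PT euclideanreal _ "{- w n..w n}"] by simp
        qed
      qed
      moreover have "\<Inter>Fam = E" unfolding Fam_def E_def by (auto simp: abs_le_iff; force)
      ultimately show ?thesis by simp
    qed
    have Kc: "compactin ?PT K"
      unfolding K_def
      by (rule closed_Int_compactin[OF Ecl]) (simp add: compactin_PiE)
    have KC: "K \<subseteq> ?C"
    proof
      fix g assume "g \<in> K"
      then have gE: "g \<in> E" unfolding K_def by blast
      have "continuous_map ?X euclideanreal g"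
      proof (rule cont_xi[OF Ff])
        fix e :: real assume "e > 0"
        then obtain M where M: "w M < e" using w_small by blast
        have "A \<inter> {max M (nn 0)..} \<in> F" using Fint[OF A cof] .
        moreover have "\<forall>n\<in>A \<inter> {max M (nn 0)..}. \<bar>g (Some n) - g None\<bar> < e"
        proof
          fix n assume "n \<in> A \<inter> {max M (nn 0)..}"
          then have "\<bar>g (Some n) - g None\<bar> \<le> w n" "w n \<le> w M" using gE w_mono[of M n] unfolding E_def by auto
          then show "\<bar>g (Some n) - g None\<bar> < e" using M by linarith
        qed
        ultimately show "\<exists>A\<in>F. \<forall>n\<in>A. \<bar>g (Some n) - g None\<bar> < e" by blast
      qed
      then show "g \<in> ?C" by simp
    qed
    have KcC: "compactin (Cp ?X) K" unfolding Cp_def compactin_subtopology using Kc KC by blast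
    have H: "Hausdorff_space (Cp ?X)" unfolding Cp_def
      by (intro Hausdorff_space_subtopology) (simp add: Hausdorff_space_product_topology)
    have Kcl: "closedin (Cp ?X) K" using compactin_imp_closedin[OF H KcC] .
    have QK: "Q \<subseteq> K"
    proof
      fix q assume "q \<in> Q"
      then obtain j where qR: "(q, j) \<in> R A" unfolding Q_def by force
      have "q \<in> E" unfolding E_def mem_Collect_eq
      proof (intro allI impI)
        fix n assume "nn 0 \<le> n \<and> n \<in> A"
        then have "\<bar>q (Some n) - q None\<bar> \<le> max 0 (w n - w (nn j))" using R_equi[OF qR] by blast
        then show "\<bar>q (Some n) - q None\<bar> \<le> w n" using w_pos[of "nn j"] w_pos[of n] by linarith
      qed
      moreover have "q \<in> Pi\<^sub>E UNIV (\<lambda>x. {- r x..r x})"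
        using R_r[OF qR] by (auto simp: abs_le_iff; smt (verit))
      ultimately show "q \<in> K" unfolding K_def by blast
    qed
    have "Cp ?X closure_of Q \<subseteq> K" using closure_of_minimal[OF QK Kcl] .
    then have "compactin (Cp ?X) (Cp ?X closure_of Q)"
      using closed_compactin[OF KcC] closedin_closure_of by blast
    then show ?thesis using QP crQ by blast
  qed
  show ?thesis
    using cD DC topC dense main by (intro exI[of _ D]) auto
qed

end
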